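(* Let $m\ge1$ and $n\ge1$ be integers, $m_1,\dots,m_n\ge1$ integers, $\alpha_0,\dots,\alpha_{m-1}$ nonnegative reals, $\gamma_1<\gamma_2<\cdots<\gamma_n$ nonnegative reals, and $\beta_k^{(j)}$ ($1\le j\le n$, $1\le k\le m_j$) positive reals. Let $$q(x)=x^m-\alpha_{m-1}x^{m-1}-\cdots-\alpha_1x-\alpha_0-\sum_{j=1}^n\sum_{k=1}^{m_j}\frac{\beta_k^{(j)}}{(x-\gamma_j)^k}.$$ Then $q$ has a real zero $R$ with $R>\gamma_n$. *)

theory Defs
  imports Complex_Main
begin

definition qfun :: "nat \<Rightarrow> (nat \<Rightarrow> real) \<Rightarrow> nat \<Rightarrow> (nat \<Rightarrow> nat) \<Rightarrow> (nat \<Rightarrow> real)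
    \<Rightarrow> (nat \<Rightarrow> nat \<Rightarrow> real) \<Rightarrow> real \<Rightarrow> real" where
  "qfun m \<alpha> n mm \<gamma> \<beta> x =
     x ^ m - (\<Sum>i<m. \<alpha> i * x ^ i)
     - (\<Sum>j=1..n. \<Sum>k=1..mm j. \<beta> j k / (x - \<gamma> j) ^ k)"

end

theory Submission
  imports Defs
begin

lemma gam_mono:
  fixes \<gamma> :: "nat \<Rightarrow> real"
  assumes "\<And>j. 1 \<le> j \<Longrightarrow> j < n \<Longrightarrow> \<gamma> j < \<gamma> (Suc j)" and "1 \<le> j"
  shows "j + d < n \<Longrightarrow> \<gamma> j < \<gamma> (Suc (j + d))"
proof (induction d)
  case 0 then show ?case using assms by simp
next
  case (Suc d)
  then have "\<gamma> j < \<gamma> (Suc (j + d))" by simp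
  also have "\<dots> < \<gamma> (Suc (Suc (j + d)))" using assms Suc.prems by simp
  finally show ?case by simp
qed

lemma gam_lt:
  fixes \<gamma> :: "nat \<Rightarrow> real"
  assumes "\<And>j. 1 \<le> j \<Longrightarrow> j < n \<Longrightarrow> \<gamma> j < \<gamma> (Suc j)" and "1 \<le> j" "j < n"
  shows "\<gamma> j < \<gamma> n"
proof -
  obtain d where d: "n = Suc (j + d)" using assms(3) by (metis less_imp_Suc_add)
  show ?thesis using gam_mono[of n \<gamma> j d] assms d by simp
qed

lemma isCont_q:
  fixes \<gamma> :: "nat \<Rightarrow> real"
  assumes "\<And>j. 1 \<le> j \<Longrightarrow> j \<le> n \<Longrightarrow> \<gamma> j < x"
  shows "isCont (qfun m \<alpha> n mm \<gamma> \<beta>) x"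
proof -
  have "isCont (\<lambda>x. x ^ m - (\<Sum>i<m. \<alpha> i * x ^ i)
     - (\<Sum>j=1..n. \<Sum>k=1..mm j. \<beta> j k / (x - \<gamma> j) ^ k)) x"
    using assms by (intro continuous_intros) auto
  then show ?thesis unfolding qfun_def[abs_def] .
qed


theorem lemma3p7:
  fixes m n :: nat and mm :: "nat \<Rightarrow> nat" and \<alpha> :: "nat \<Rightarrow> real"
    and \<gamma> :: "nat \<Rightarrow> real" and \<beta> :: "nat \<Rightarrow> nat \<Rightarrow> real"
  assumes "m \<ge> 1" and "n \<ge> 1"
    and "\<And>j. 1 \<le> j \<Longrightarrow> j \<le> n \<Longrightarrow> mm j \<ge> 1"
    and "\<And>i. i < m \<Longrightarrow> \<alpha> i \<ge> 0"
    and "\<And>j. 1 \<le> j \<Longrightarrow> j \<le> n \<Longrightarrow> \<gamma> j \<ge> 0"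
    and "\<And>j. 1 \<le> j \<Longrightarrow> j < n \<Longrightarrow> \<gamma> j < \<gamma> (Suc j)"
    and "\<And>j k. 1 \<le> j \<Longrightarrow> j \<le> n \<Longrightarrow> 1 \<le> k \<Longrightarrow> k \<le> mm j \<Longrightarrow> \<beta> j k > 0"
  shows "\<exists>R::real. R > \<gamma> n \<and> qfun m \<alpha> n mm \<gamma> \<beta> R = 0"
proof -
  let ?q = "qfun m \<alpha> n mm \<gamma> \<beta>"
  have glt: "\<gamma> j < \<gamma> n" if "1 \<le> j" "j < n" for j using gam_lt[of n \<gamma> j] assms(6) that by blast
  have gle: "\<gamma> j \<le> \<gamma> n" if "1 \<le> j" "j \<le> n" for j using glt[of j] that by force
  obtain n' where n': "n = Suc n'" using assms(2) by (cases n) auto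
  define f where "f x = x ^ m - (\<Sum>i<m. \<alpha> i * x ^ i)
     - (\<Sum>j=1..n'. \<Sum>k=1..mm j. \<beta> j k / (x - \<gamma> j) ^ k)" for x
  define T where "T x = (\<Sum>k=1..mm n. \<beta> n k / (x - \<gamma> n) ^ k)" for x
  have qfT: "?q x = f x - T x" for x
    unfolding qfun_def f_def T_def n' by (simp add: sum.cl_ivl_Suc)
  have "isCont f (\<gamma> n)"
    unfolding f_def[abs_def] using glt n' by (intro continuous_intros) force+
  then have flim: "(f \<longlongrightarrow> f (\<gamma> n)) (at_right (\<gamma> n))"
    using filterlim_at_split isCont_def by blast
  have b1: "\<beta> n 1 > 0" using assms(3,7)[of n] assms(2) by simp
  have "((\<lambda>x. x - \<gamma> n) \<longlongrightarrow> 0) (at_right (\<gamma> n))"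
  proof -
    have "((\<lambda>x. x - \<gamma> n) \<longlongrightarrow> \<gamma> n - \<gamma> n) (at_right (\<gamma> n))"
      by (intro tendsto_intros)
    then show ?thesis by simp
  qed
  moreover have "eventually (\<lambda>x. 0 < x - \<gamma> n) (at_right (\<gamma> n))"
    by (simp add: eventually_at_right_less)
  ultimately have "LIM x at_right (\<gamma> n). inverse (x - \<gamma> n) :> at_top"
    by (rule filterlim_inverse_at_top)
  then have "LIM x at_right (\<gamma> n). \<beta> n 1 * inverse (x - \<gamma> n) :> at_top"
    using b1 by (intro filterlim_tendsto_pos_mult_at_top[OF tendsto_const]) auto
  then have "LIM x at_right (\<gamma> n). - f x + \<beta> n 1 * inverse (x - \<gamma> n) :> at_top"
    by (intro filterlim_tendsto_add_at_top[OF tendsto_minus[OF flim]])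
  moreover have "eventually (\<lambda>x. - f x + \<beta> n 1 * inverse (x - \<gamma> n) \<le> - ?q x) (at_right (\<gamma> n))"
  proof -
    have "eventually (\<lambda>x. x > \<gamma> n) (at_right (\<gamma> n))" by (simp add: eventually_at_right_less)
    then show ?thesis
    proof eventually_elim
      case (elim x)
      have "\<beta> n 1 / (x - \<gamma> n) ^ 1 \<le> T x" unfolding T_def
        apply (rule member_le_sum)
        using assms(3)[of n] assms(2) apply simp
        using elim assms(7)[of n] assms(2) by (auto intro!: divide_nonneg_pos less_imp_le)
      then show ?case by (simp add: qfT divide_inverse)
    qed
  qed
  ultimately have "LIM x at_right (\<gamma> n). - ?q x :> at_top" by (rule filterlim_at_top_mono)
  then have "eventually (\<lambda>x. 1 \<le> - ?q x) (at_right (\<gamma> n))"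
    unfolding filterlim_at_top by (rule spec)
  then obtain b where b: "b > \<gamma> n" "\<And>y. \<gamma> n < y \<Longrightarrow> y < b \<Longrightarrow> 1 \<le> - ?q y"
    using eventually_at_right[of "\<gamma> n" "\<gamma> n + 1" "\<lambda>x. 1 \<le> - ?q x"] by auto
  define a where "a = (\<gamma> n + b) / 2"
  have a1: "a > \<gamma> n" "a < b" using b unfolding a_def by auto
  have a: "a > \<gamma> n" "?q a < 0" using a1 b(2)[OF a1] by auto
  define A where "A = (\<Sum>i<m. \<alpha> i)"
  define B where "B = (\<Sum>j=1..n. \<Sum>k=1..mm j. \<beta> j k)"
  define c where "c = max (max 1 (\<gamma> n + 1)) (max (A + B + 1) a)"
  have c1: "c \<ge> 1" "c \<ge> \<gamma> n + 1" "c \<ge> A + B + 1" "c \<ge> a" unfolding c_def by auto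
  have Apos: "A \<ge> 0" unfolding A_def using assms(4) by (auto intro: sum_nonneg)
  have Bpos: "B \<ge> 0" unfolding B_def by (intro sum_nonneg) (metis assms(7) atLeastAtMost_iff less_imp_le)
  have hA: "(\<Sum>i<m. \<alpha> i * c ^ i) \<le> A * c ^ (m - 1)"
    unfolding A_def sum_distrib_right
  proof (rule sum_mono)
    fix i assume "i \<in> {..<m}"
    then have "c ^ i \<le> c ^ (m - 1)" using c1 by (intro power_increasing) auto
    then show "\<alpha> i * c ^ i \<le> \<alpha> i * c ^ (m - 1)" using assms(4) \<open>i \<in> {..<m}\<close>
      by (intro mult_left_mono) auto
  qed
  have hB: "(\<Sum>j=1..n. \<Sum>k=1..mm j. \<beta> j k / (c - \<gamma> j) ^ k) \<le> B"
    unfolding B_def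
  proof (intro sum_mono)
    fix j k assume j: "j \<in> {1..n}" and k: "k \<in> {1..mm j}"
    have "1 \<le> c - \<gamma> j" using gle[of j] j c1 by auto
    then have "1 \<le> (c - \<gamma> j) ^ k" by (rule one_le_power)
    moreover have "\<beta> j k > 0" using assms(7)[of j k] j k by auto
    ultimately show "\<beta> j k / (c - \<gamma> j) ^ k \<le> \<beta> j k"
      by (simp add: divide_le_eq_1 divide_le_cancel mult_le_cancel_left1 pos_divide_le_eq)
  qed
  have "c ^ m = c ^ (m - 1) * c" using assms(1) by (cases m) auto
  have pm: "c ^ (m - 1) \<ge> 1" using c1 by (simp add: one_le_power)
  have "c ^ (m - 1) * (c - A) \<ge> c - A"
    using mult_right_mono[of 1 "c ^ (m - 1)" "c - A"] pm c1 Apos Bpos by simp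
  then have "?q c \<ge> c - A - B"
  proof -
    have e: "?q c = c ^ m - (\<Sum>i<m. \<alpha> i * c ^ i) - (\<Sum>j=1..n. \<Sum>k=1..mm j. \<beta> j k / (c - \<gamma> j) ^ k)"
      unfolding qfun_def by simp
    have "c ^ (m - 1) * (c - A) = c ^ m - A * c ^ (m - 1)"
      using \<open>c ^ m = c ^ (m - 1) * c\<close> by (simp add: algebra_simps)
    then show ?thesis using e hA hB \<open>c ^ (m - 1) * (c - A) \<ge> c - A\<close> by linarith
  qed
  then have qc: "?q c > 0" using c1 by linarith
  have "\<exists>x\<ge>a. x \<le> c \<and> ?q x = 0"
  proof (rule IVT)
    show "?q a \<le> 0" using a by simp
    show "0 \<le> ?q c" using qc by simp
    show "a \<le> c" using c1 by simp
    show "\<forall>x. a \<le> x \<and> x \<le> c \<longrightarrow> isCont ?q x"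
      using a gle by (auto intro!: isCont_q) (meson le_less_trans less_le_trans)
  qed
  then obtain x where "x \<ge> a" "?q x = 0" by blast
  then show ?thesis using a(1) by (intro exI[of _ x]) auto
qed

end
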